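(* Let $0<q<1$, $0<a<q^{-1}$, $b<q^{-1}$, $c\in\mathbb{C}\setminus\{0\}$ with $\alpha acq^{m}\ne1$, $\alpha bq^m/c\neq1$ for $m\ge1$, and let $\alpha$ satisfy $\sqrt{aq}<\alpha<1/\sqrt{aq}$. For $n\in\mathbb{N}$ and $x=\cos\theta$, $\theta\in[0,\pi]$, \[ \sum_{k=0}^\infty\alpha^k p_n(q^k;a,b;q)\,\frac{(\sqrt{aq})^k}{(q;q)_k}\,Q_k\bigl(x;c\sqrt{aq},\tfrac{b}{c}\sqrt{q/a}\,\big|\,q\bigr) =\frac{\alpha^n(aq)^{n/2}\,(\alpha acq^{n+1},\alpha bq^{n+1}/c;q)_\infty}{(aq;q)_n\,(\alpha\sqrt{aq}\,e^{i\theta},\alpha\sqrt{aq}\,e^{-i\theta};q)_\infty}\;p_n\bigl(x;\alpha\sqrt{aq},c\sqrt{aq},\tfrac{b}{c}\sqrt{q/a},\sqrt{aq}/\alpha\,\big|\,q\bigr). \] In particular, for $\alpha=1$ the right-hand side is $\frac{(aq)^{n/2}(acq^{n+1},bq^{n+1}/c;q)_\infty}{(aq;q)_n(\sqrt{aq}e^{i\theta},\sqrt{aq}e^{-i\theta};q)_\infty}\,p_n(x;\sqrt{aq},c\sqrt{aq},\tfrac bc\sqrt{q/a},\sqrt{aq}|q)$.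
   Context: $(x;q)_k=\prod_{j=0}^{k-1}(1-xq^j)$, $(x;q)_\infty=\prod_{j\ge0}(1-xq^j)$, $(x_1,\dots,x_r;q)_k=\prod_i(x_i;q)_k$. ${}_{r}\phi_{s}\!\left(\begin{smallmatrix}a_1,\dots,a_r\\ b_1,\dots,b_s\end{smallmatrix};q,z\right)=\sum_{j\ge0}\frac{(a_1,\dots,a_r;q)_j}{(q,b_1,\dots,b_s;q)_j}\bigl((-1)^jq^{j(j-1)/2}\bigr)^{1+s-r}z^j$. Little $q$-Jacobi: $p_n(x;a,b;q)={}_2\phi_1\!\left(\begin{smallmatrix}q^{-n},abq^{n+1}\\ aq\end{smallmatrix};q,qx\right)$. Al-Salam–Chihara: $Q_n(x;c_1,c_2|q)=\frac{(c_1c_2;q)_n}{c_1^n}\,{}_3\phi_2\!\left(\begin{smallmatrix}q^{-n},c_1e^{i\theta},c_1e^{-i\theta}\\ c_1c_2,\,0\end{smallmatrix};q,q\right)$. Askey–Wilson: $p_n(x;a_1,a_2,a_3,a_4|q)=a_1^{-n}(a_1a_2,a_1a_3,a_1a_4;q)_n\,{}_4\phi_3\!\left(\begin{smallmatrix}q^{-n},a_1a_2a_3a_4q^{n-1},a_1e^{i\theta},a_1e^{-i\theta}\\ a_1a_2,\,a_1a_3,\,a_1a_4\end{smallmatrix};q,q\right)$, all with $x=\cos\theta$. *)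

theory Defs
  imports "HOL-Analysis.Analysis"
begin

definition qpoch :: "complex \<Rightarrow> real \<Rightarrow> nat \<Rightarrow> complex" where
  "qpoch x q k = (\<Prod>j<k. 1 - x * of_real q ^ j)"

definition qpoch_inf :: "complex \<Rightarrow> real \<Rightarrow> complex" where
  "qpoch_inf x q = (\<Prod>j. 1 - x * of_real q ^ j)"

definition qphi :: "complex list \<Rightarrow> complex list \<Rightarrow> real \<Rightarrow> complex \<Rightarrow> complex" where
  "qphi as bs q z =
     (\<Sum>j. (\<Prod>a\<leftarrow>as. qpoch a q j) / (qpoch (of_real q) q j * (\<Prod>b\<leftarrow>bs. qpoch b q j))
          * (((-1) ^ j * of_real q ^ (j * (j - 1) div 2)) powi (1 + int (length bs) - int (length as)))
          * z ^ j)"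

definition little_q_jacobi :: "nat \<Rightarrow> complex \<Rightarrow> complex \<Rightarrow> complex \<Rightarrow> real \<Rightarrow> complex" where
  "little_q_jacobi n x a b q =
     qphi [inverse (of_real q ^ n), a * b * of_real q ^ (n + 1)] [a * of_real q] q (of_real q * x)"

definition al_salam_chihara :: "nat \<Rightarrow> real \<Rightarrow> complex \<Rightarrow> complex \<Rightarrow> real \<Rightarrow> complex" where
  "al_salam_chihara n x c1 c2 q =
     (let \<theta> = arccos x in
      qpoch (c1 * c2) q n / c1 ^ n *
      qphi [inverse (of_real q ^ n), c1 * cis \<theta>, c1 * cis (- \<theta>)] [c1 * c2, 0] q (of_real q))"

definition askey_wilson :: "nat \<Rightarrow> real \<Rightarrow> complex \<Rightarrow> complex \<Rightarrow> complex \<Rightarrow> complex \<Rightarrow> real \<Rightarrow> complex" where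
  "askey_wilson n x a1 a2 a3 a4 q =
     (let \<theta> = arccos x in
      qpoch (a1 * a2) q n * qpoch (a1 * a3) q n * qpoch (a1 * a4) q n / a1 ^ n *
      qphi [inverse (of_real q ^ n), a1 * a2 * a3 * a4 * of_real q ^ n / of_real q, a1 * cis \<theta>, a1 * cis (- \<theta>)]
           [a1 * a2, a1 * a3, a1 * a4] q (of_real q))"

end

theory Submission
  imports Defs "HOL-Computational_Algebra.Formal_Power_Series"
begin


lemma qpoch_0[simp]: "qpoch x q 0 = 1" by (simp add: qpoch_def)

lemma qpoch_Suc: "qpoch x q (Suc k) = qpoch x q k * (1 - x * of_real q ^ k)"
  by (simp add: qpoch_def)

lemma qpoch_add: "qpoch x q (m + k) = qpoch x q m * qpoch (x * of_real q ^ m) q k"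
  by (induction k) (simp_all add: qpoch_Suc power_add mult.assoc mult.left_commute)

lemma qpoch_zero_arg[simp]: "qpoch 0 q k = 1" by (simp add: qpoch_def)

lemma qpoch_inv_zero:
  assumes "q \<noteq> 0" "k < j"
  shows "qpoch (inverse (of_real q ^ k)) q j = 0"
proof -
  have "k \<in> {..<j}" using assms by auto
  moreover have "1 - inverse (of_real q ^ k) * (of_real q :: complex) ^ k = 0"
    using assms by simp
  ultimately show ?thesis unfolding qpoch_def by (intro prod_zero) auto
qed

lemma qpoch_nonzero:
  assumes "\<And>i. i < k \<Longrightarrow> x * of_real q ^ i \<noteq> 1"
  shows "qpoch x q k \<noteq> 0"
  unfolding qpoch_def using assms by (auto simp: prod_zero_iff)

lemma qpoch_inf_conv:
  fixes x :: complex
  assumes "0 \<le> q" "q < 1"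
  shows "convergent_prod (\<lambda>j. 1 - x * of_real q ^ j)"
proof -
  have "summable (\<lambda>j. norm x * q ^ j)"
    using assms by (intro summable_mult summable_geometric) auto
  then have "summable (\<lambda>j. norm ((1 - x * of_real q ^ j) - 1))"
    using assms by (simp add: norm_mult norm_power)
  then show ?thesis
    by (intro abs_convergent_prod_imp_convergent_prod summable_imp_abs_convergent_prod)
qed

lemma qpoch_inf_LIMSEQ:
  assumes "0 \<le> q" "q < 1"
  shows "(\<lambda>N. qpoch x q N) \<longlonglongrightarrow> qpoch_inf x q"
proof -
  have "(\<lambda>n. \<Prod>i\<le>n. 1 - x * of_real q ^ i) \<longlonglongrightarrow> qpoch_inf x q"
    unfolding qpoch_inf_def using convergent_prod_LIMSEQ[OF qpoch_inf_conv[OF assms]] .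
  then have "(\<lambda>n. qpoch x q (Suc n)) \<longlonglongrightarrow> qpoch_inf x q"
    by (simp add: qpoch_def lessThan_Suc_atMost)
  then show ?thesis by (rule LIMSEQ_imp_Suc)
qed

lemma qpoch_inf_split:
  assumes "0 \<le> q" "q < 1"
  shows "qpoch_inf x q = qpoch x q m * qpoch_inf (x * of_real q ^ m) q"
proof -
  have hp: "(\<lambda>j. 1 - x * of_real q ^ j) has_prod
          ((\<Prod>k<m. 1 - x * of_real q ^ k) * (\<Prod>k. 1 - x * of_real q ^ (k + m)))"
    by (rule has_prod_ignore_initial_segment'[OF qpoch_inf_conv[OF assms]])
  have e: "(\<lambda>k. 1 - x * of_real q ^ (k + m)) = (\<lambda>k. 1 - x * of_real q ^ m * of_real q ^ k)"
    by (simp add: power_add mult_ac)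
  show ?thesis
    using has_prod_unique[OF hp] unfolding qpoch_inf_def qpoch_def e by simp
qed

lemma qpoch_inf_nonzero:
  assumes "0 \<le> q" "q < 1" "\<And>i. x * of_real q ^ i \<noteq> 1"
  shows "qpoch_inf x q \<noteq> 0"
  unfolding qpoch_inf_def
  by (rule prodinf_nonzero[OF qpoch_inf_conv[OF assms(1,2)]]) (use assms(3) in auto)



lemma ratio_summable_norm:
  fixes f :: "nat \<Rightarrow> complex"
  assumes "\<And>m. norm (f (Suc m)) \<le> \<rho> m * norm (f m)" "\<rho> \<longlonglongrightarrow> L" "L < 1"
  shows "summable (\<lambda>m. norm (f m))"
proof -
  define c where "c = (L + 1) / 2"
  have "c < 1" "L < c" using assms(3) by (auto simp: c_def)
  then have "eventually (\<lambda>m. \<rho> m < c) sequentially"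
    using order_tendstoD(2)[OF assms(2)] by auto
  then obtain N where N: "\<And>m. m \<ge> N \<Longrightarrow> \<rho> m < c" by (auto simp: eventually_sequentially)
  show ?thesis
  proof (rule summable_ratio_test[OF \<open>c < 1\<close>, of N])
    fix m assume "m \<ge> N"
    have "norm (f (Suc m)) \<le> \<rho> m * norm (f m)" by (rule assms(1))
    also have "\<dots> \<le> c * norm (f m)" using N[OF \<open>m \<ge> N\<close>] by (intro mult_right_mono) auto
    finally show "norm (norm (f (Suc m))) \<le> c * norm (norm (f m))" by simp
  qed
qed

lemma qq_lt1: "0 < q \<Longrightarrow> q < 1 \<Longrightarrow> q * q ^ j < (1::real)"
  using power_Suc_less_one[of q j] by simp

lemma cqq_ne1: "0 < q \<Longrightarrow> q < 1 \<Longrightarrow> complex_of_real q * complex_of_real q ^ j \<noteq> 1"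
proof -
  assume "0 < q" "q < 1"
  then have "q * q ^ j \<noteq> 1" using qq_lt1[of q j] by simp
  then show ?thesis by (metis of_real_1 of_real_eq_iff of_real_mult of_real_power)
qed

lemma qpoch_q_pos:
  assumes "0 < q" "q < 1"
  shows "qpoch (of_real q) q m = of_real (\<Prod>j<m. 1 - q * q ^ j)" "(\<Prod>j<m. 1 - q * q ^ j) > 0"
proof -
  show "qpoch (of_real q) q m = of_real (\<Prod>j<m. 1 - q * q ^ j)" by (simp add: qpoch_def)
  have "\<And>j. q * q ^ j < 1"
    using assms qq_lt1 by blast
  then show "(\<Prod>j<m. 1 - q * q ^ j) > 0" by (intro prod_pos) auto
qed

definition qb :: "complex \<Rightarrow> real \<Rightarrow> nat \<Rightarrow> complex" where
  "qb x q m = qpoch x q m / qpoch (of_real q) q m"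

lemma qb_Suc:
  assumes "0 < q" "q < 1"
  shows "qb x q (Suc m) * (1 - of_real q ^ Suc m) = qb x q m * (1 - x * of_real q ^ m)"
proof -
  have nz: "qpoch (of_real q) q m \<noteq> 0" using cqq_ne1[OF assms] by (intro qpoch_nonzero) auto
  have "(1 - of_real q * of_real q ^ m :: complex) \<noteq> 0"
  proof -
    show ?thesis using cqq_ne1[OF assms, of m] by simp
  qed
  then show ?thesis using nz unfolding qb_def by (simp add: qpoch_Suc field_simps)
qed

lemma qb_summable:
  assumes "0 < q" "q < 1" "norm z < 1"
  shows "summable (\<lambda>m. norm (qb x q m * z ^ m))"
proof (rule ratio_summable_norm)
  fix m
  have p: "(1 - q ^ Suc m) > 0" using qq_lt1[OF assms(1,2), of m] by simp
  have "qb x q (Suc m) = qb x q m * (1 - x * of_real q ^ m) / (1 - of_real q ^ Suc m)"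
  proof -
    have "(1 - of_real q ^ Suc m :: complex) \<noteq> 0"
      using p by (metis eq_iff_diff_eq_0 less_irrefl of_real_1 of_real_eq_iff of_real_power)
    then show ?thesis using qb_Suc[OF assms(1,2), of x m] by (simp add: field_simps)
  qed
  then have "qb x q (Suc m) * z ^ Suc m = (qb x q m * z ^ m) * ((1 - x * of_real q ^ m) * z / (1 - of_real q ^ Suc m))"
    by (simp add: ac_simps times_divide_eq_right)
  then have "norm (qb x q (Suc m) * z ^ Suc m)
      = norm (qb x q m * z ^ m) * (norm (1 - x * of_real q ^ m) * norm z / norm (1 - of_real q ^ Suc m :: complex))"
    by (simp only: norm_mult norm_divide)
  also have "norm (1 - of_real q ^ Suc m :: complex) = 1 - q ^ Suc m"
  proof -
    have "(1 - of_real q ^ Suc m :: complex) = of_real (1 - q ^ Suc m)" by simp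
    then show ?thesis using p by (simp only: norm_of_real)
  qed
  finally have eq: "norm (qb x q (Suc m) * z ^ Suc m)
      = norm (qb x q m * z ^ m) * (norm (1 - x * of_real q ^ m) * norm z / (1 - q ^ Suc m))" .
  have "norm (1 - x * of_real q ^ m) \<le> norm (1::complex) + norm (x * of_real q ^ m)"
    by (rule norm_triangle_ineq4)
  also have "\<dots> = 1 + norm x * q ^ m" using assms by (simp add: norm_mult norm_power)
  finally have le: "norm (1 - x * of_real q ^ m) \<le> 1 + norm x * q ^ m" .
  have AB: "norm (1 - x * of_real q ^ m) * norm z / (1 - q ^ Suc m) \<le> (1 + norm x * q ^ m) * norm z / (1 - q ^ Suc m)"
    using p le by (intro divide_right_mono mult_right_mono) auto
  then show "norm (qb x q (Suc m) * z ^ Suc m) \<le>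
        ((1 + norm x * q ^ m) * norm z / (1 - q ^ Suc m)) * norm (qb x q m * z ^ m)"
    using eq mult_left_mono[OF AB norm_ge_zero[of "qb x q m * z ^ m"]] by (metis mult.commute)
next
  have "(\<lambda>m. q ^ m) \<longlonglongrightarrow> 0" using assms by (intro LIMSEQ_power_zero) auto
  then have "(\<lambda>m. q ^ Suc m) \<longlonglongrightarrow> 0" by (rule LIMSEQ_Suc)
  show "(\<lambda>m. (1 + norm x * q ^ m) * norm z / (1 - q ^ Suc m)) \<longlonglongrightarrow> (1 + norm x * 0) * norm z / (1 - 0)"
    by (intro tendsto_intros \<open>(\<lambda>m. q ^ m) \<longlonglongrightarrow> 0\<close> \<open>(\<lambda>m. q ^ Suc m) \<longlonglongrightarrow> 0\<close>) auto
next
  show "(1 + norm x * 0) * norm z / (1 - 0) < 1" using assms by simp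
qed



lemma qb_summable':
  assumes "0 < q" "q < 1" "norm z < 1"
  shows "summable (\<lambda>m. qb x q m * z ^ m)"
  using summable_norm_cancel[OF qb_summable[OF assms]] .

lemma norm_qz:
  fixes z :: complex
  assumes "0 < q" "q < 1" "norm z < 1"
  shows "norm (of_real q * z) < 1"
proof -
  have "norm (of_real q * z) = q * norm z" using assms by (simp add: norm_mult)
  also have "\<dots> \<le> norm z" using assms by (simp add: mult_left_le_one_le)
  finally show ?thesis using assms by simp
qed

lemma qb_funeq:
  assumes q: "0 < q" "q < 1" and z: "norm z < 1"
  shows "(1 - z) * (\<Sum>m. qb a q m * z ^ m) = (1 - a * z) * (\<Sum>m. qb a q m * (of_real q * z) ^ m)"
proof -
  define f where "f m = qb a q m * z ^ m" for m
  define g where "g m = qb a q m * (of_real q * z) ^ m" for m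
  have sf: "f sums (\<Sum>m. f m)" unfolding f_def using qb_summable'[OF q z] by (rule summable_sums)
  have sg: "g sums (\<Sum>m. g m)" unfolding g_def using qb_summable'[OF q norm_qz[OF q z]] by (rule summable_sums)
  have "(\<lambda>m. f m - g m) sums ((\<Sum>m. f m) - (\<Sum>m. g m))" by (rule sums_diff[OF sf sg])
  moreover have "f 0 - g 0 = 0" by (simp add: f_def g_def)
  ultimately have s1: "(\<lambda>m. f (Suc m) - g (Suc m)) sums ((\<Sum>m. f m) - (\<Sum>m. g m))"
    using sums_Suc_iff[of "\<lambda>m. f m - g m"] by simp
  have "f (Suc m) - g (Suc m) = z * (f m - a * g m)" for m
  proof -
    have "f (Suc m) - g (Suc m) = qb a q (Suc m) * (1 - of_real q ^ Suc m) * z ^ Suc m"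
      by (simp add: f_def g_def power_mult_distrib algebra_simps)
    also have "\<dots> = qb a q m * (1 - a * of_real q ^ m) * z ^ Suc m"
      using qb_Suc[OF q, of a m] by simp
    also have "\<dots> = z * (f m - a * g m)"
      by (simp add: f_def g_def power_mult_distrib algebra_simps)
    finally show ?thesis .
  qed
  with s1 have s2: "(\<lambda>m. z * (f m - a * g m)) sums ((\<Sum>m. f m) - (\<Sum>m. g m))" by simp
  have "(\<lambda>m. z * (f m - a * g m)) sums (z * ((\<Sum>m. f m) - a * (\<Sum>m. g m)))"
    by (intro sums_mult sums_diff sf sums_mult sg)
  with s2 have "(\<Sum>m. f m) - (\<Sum>m. g m) = z * ((\<Sum>m. f m) - a * (\<Sum>m. g m))"
    using sums_unique2 by blast
  then show ?thesis unfolding f_def[symmetric] g_def[symmetric] by (simp add: algebra_simps)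
qed

lemma qb_iter:
  assumes q: "0 < q" "q < 1" and z: "norm z < 1"
  shows "(\<Sum>m. qb a q m * z ^ m) * qpoch z q N
       = (\<Sum>m. qb a q m * (of_real q ^ N * z) ^ m) * qpoch (a * z) q N"
proof (induction N)
  case 0
  then show ?case by simp
next
  case (Suc N)
  have nz: "norm (of_real q ^ N * z) < 1"
  proof -
    have "norm (of_real q ^ N * z) = q ^ N * norm z" using q by (simp add: norm_mult norm_power)
    also have "\<dots> \<le> norm z" using q by (simp add: mult_left_le_one_le power_le_one)
    finally show ?thesis using z by simp
  qed
  have "(\<Sum>m. qb a q m * z ^ m) * qpoch z q (Suc N)
      = ((\<Sum>m. qb a q m * (of_real q ^ N * z) ^ m) * (1 - of_real q ^ N * z)) * qpoch (a * z) q N"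
    using Suc by (simp add: qpoch_Suc mult_ac)
  also have "(\<Sum>m. qb a q m * (of_real q ^ N * z) ^ m) * (1 - of_real q ^ N * z)
     = (1 - a * (of_real q ^ N * z)) * (\<Sum>m. qb a q m * (of_real q * (of_real q ^ N * z)) ^ m)"
    using qb_funeq[OF q nz, of a] by (simp add: mult.commute)
  finally show ?case by (simp add: qpoch_Suc mult_ac)
qed

theorem q_binomial:
  assumes q: "0 < q" "q < 1" and z: "norm z < 1"
  shows "(\<lambda>m. qb a q m * z ^ m) sums (qpoch_inf (a * z) q / qpoch_inf z q)"
proof -
  define F where "F w = (\<Sum>m. qb a q m * w ^ m)" for w
  define r where "r = (1 + norm z) / 2"
  define K where "K = complex_of_real r"
  have nz0: "0 \<le> norm z" by simp
  have "0 < 1 + norm z" using nz0 by (rule add_pos_nonneg[OF zero_less_one])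
  then have r1: "0 < r" unfolding r_def by simp
  have r2: "r < 1" unfolding r_def using z by (simp add: field_simps)
  note r = r1 r2
  have "norm K = r" unfolding K_def using r by simp
  then have nK: "norm K < 1" "norm (0::complex) < norm K" using r by auto
  have "isCont F 0" unfolding F_def
    by (rule isCont_powser[OF qb_summable'[OF q nK(1)] nK(2)])
  moreover have "(\<lambda>N. of_real q ^ N * z) \<longlonglongrightarrow> 0"
  proof -
    have "(\<lambda>N. (of_real q :: complex) ^ N) \<longlonglongrightarrow> 0"
      using q by (intro LIMSEQ_power_zero) auto
    then show ?thesis using tendsto_mult_left_zero by blast
  qed
  ultimately have "(\<lambda>N. F (of_real q ^ N * z)) \<longlonglongrightarrow> F 0" by (rule isCont_tendsto_compose)
  moreover have "F 0 = 1" unfolding F_def using powser_zero[of "qb a q"] by (simp add: qb_def)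
  ultimately have l1: "(\<lambda>N. F (of_real q ^ N * z)) \<longlonglongrightarrow> 1" by simp
  have "(\<lambda>N. F (of_real q ^ N * z) * qpoch (a * z) q N) \<longlonglongrightarrow> 1 * qpoch_inf (a * z) q"
    by (intro tendsto_mult l1 qpoch_inf_LIMSEQ) (use q in auto)
  moreover have "(\<lambda>N. F z * qpoch z q N) \<longlonglongrightarrow> F z * qpoch_inf z q"
    by (intro tendsto_mult tendsto_const qpoch_inf_LIMSEQ) (use q in auto)
  moreover have "F z * qpoch z q N = F (of_real q ^ N * z) * qpoch (a * z) q N" for N
    unfolding F_def by (rule qb_iter[OF q z])
  ultimately have "F z * qpoch_inf z q = qpoch_inf (a * z) q"
    using LIMSEQ_unique by fastforce
  moreover have "qpoch_inf z q \<noteq> 0"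
  proof (rule qpoch_inf_nonzero)
    fix i
    have "norm (z * of_real q ^ i) = norm z * q ^ i" using q by (simp add: norm_mult norm_power)
    also have "\<dots> \<le> norm z" using q by (intro mult_right_le_one_le) (auto simp: power_le_one)
    finally show "z * of_real q ^ i \<noteq> 1" using z by auto
  qed (use q in auto)
  ultimately have "F z = qpoch_inf (a * z) q / qpoch_inf z q" by (simp add: field_simps)
  then show ?thesis unfolding F_def using summable_sums[OF qb_summable'[OF q z, of a]] by simp
qed



lemma alg_poly:
  fixes Q x y w c1 c2 :: complex
  assumes wy: "w * y = 1"
  shows "(1 - c1*c2*y) * (Q - w) * x * (1 - w)
    = (1 - w*x) * (1 + c1^2*Q^2*x^2 - c1*(c1+c2)*y*Q*x) * (1 - w)
      - (1 - Q*x) * (1 - c1*c2*x) * (1 - w)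
      - c1^2 * (1 - y) * (1 - w*x) * (1 - w*Q*x) * Q * x"
  using wy by algebra

lemma alg_r:
  fixes Q x y w c1 c2 :: complex
  assumes wy: "w * y = 1" and nz: "Q \<noteq> 0" "x \<noteq> 0" "c1 \<noteq> 0" "w \<noteq> 1"
  shows "(1 - c1*c2*y) * (1 - w/Q)
    = c1 * (1 - w*x) * (1/(c1*(Q*x)) + c1*(Q*x) - (c1+c2)*y)
      - (1 - Q*x) * (1 - c1*c2*x) / (Q*x)
      - c1^2 * (1 - y) * ((1 - w*x) * (1 - w*(Q*x)) / (1 - w))"
proof -
  have w1: "1 - w \<noteq> 0" using nz by simp
  define M where "M = Q * x * (1 - w)"
  have L: "(1 - c1*c2*y) * (1 - w/Q) * M = (1 - c1*c2*y) * (Q - w) * x * (1 - w)"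
    unfolding M_def using nz by (simp add: field_simps)
  have t1: "c1 * (1 - w*x) * (1/(c1*(Q*x)) + c1*(Q*x) - (c1+c2)*y) * M
      = (1 - w*x) * (1 + c1^2*Q^2*x^2 - c1*(c1+c2)*y*Q*x) * (1 - w)"
    unfolding M_def using nz by (simp add: field_simps power2_eq_square)
  have t2: "(1 - Q*x) * (1 - c1*c2*x) / (Q*x) * M = (1 - Q*x) * (1 - c1*c2*x) * (1 - w)"
    unfolding M_def using nz by (simp add: field_simps)
  have t3: "c1^2 * (1 - y) * ((1 - w*x) * (1 - w*(Q*x)) / (1 - w)) * M
      = c1^2 * (1 - y) * (1 - w*x) * (1 - w*Q*x) * Q * x"
    unfolding M_def using w1 by (simp add: field_simps)
  have R: "(c1 * (1 - w*x) * (1/(c1*(Q*x)) + c1*(Q*x) - (c1+c2)*y)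
      - (1 - Q*x) * (1 - c1*c2*x) / (Q*x)
      - c1^2 * (1 - y) * ((1 - w*x) * (1 - w*(Q*x)) / (1 - w))) * M
     = c1 * (1 - w*x) * (1/(c1*(Q*x)) + c1*(Q*x) - (c1+c2)*y) * M
      - (1 - Q*x) * (1 - c1*c2*x) / (Q*x) * M
      - c1^2 * (1 - y) * ((1 - w*x) * (1 - w*(Q*x)) / (1 - w)) * M"
    by (simp only: left_diff_distrib)
  have "(1 - c1*c2*y) * (1 - w/Q) * M = (c1 * (1 - w*x) * (1/(c1*(Q*x)) + c1*(Q*x) - (c1+c2)*y)
      - (1 - Q*x) * (1 - c1*c2*x) / (Q*x)
      - c1^2 * (1 - y) * ((1 - w*x) * (1 - w*(Q*x)) / (1 - w))) * M"
    unfolding R t1 t2 t3 L using alg_poly[OF wy, of c1 c2 Q x] by simp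
  moreover have "M \<noteq> 0" unfolding M_def using nz w1 by simp
  ultimately show ?thesis by (metis mult_right_cancel)
qed



lemma qpoch_Suc_shift: "qpoch x q (Suc k) = (1 - x) * qpoch (x * of_real q) q k"
  unfolding qpoch_def by (subst prod.lessThan_Suc_shift) (simp add: mult_ac)

locale ascs =
  fixes q :: real and c1 c2 :: complex and \<theta> :: real
  assumes q0: "0 < q" and q1: "q < 1" and c1nz: "c1 \<noteq> 0"
    and Anz: "\<And>i. c1 * c2 * of_real q ^ i \<noteq> 1"
begin

abbreviation "Q \<equiv> (of_real q :: complex)"
definition "e = cis \<theta>"
definition "e' = cis (- \<theta>)"
definition "s = e + e'"
abbreviation "A \<equiv> c1 * c2"

lemma ee': "e * e' = 1" unfolding e_def e'_def by (simp add: cis_mult)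

definition "phi j = qpoch (c1 * e) q j * qpoch (c1 * e') q j"
definition "Pk k = qpoch A q k / (qpoch Q q k * c1 ^ k)"
definition "Rk k j = qpoch (inverse (Q ^ k)) q j * Q ^ j / (qpoch Q q j * qpoch A q j)"
definition "gs k = (\<Sum>j<Suc k. Pk k * Rk k j * phi j)"

lemma Qnz: "Q \<noteq> 0" using q0 by simp

lemma Rk_0[simp]: "Rk k 0 = 1" by (simp add: Rk_def)

lemma Rk_zero: "k < j \<Longrightarrow> Rk k j = 0"
  unfolding Rk_def using qpoch_inv_zero[of q k j] q0 by simp

lemma gs_ext: "N \<ge> Suc k \<Longrightarrow> gs k = (\<Sum>j<N. Pk k * Rk k j * phi j)"
  unfolding gs_def by (rule sum.mono_neutral_left) (auto simp: Rk_zero)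

lemma qQ_nz: "qpoch Q q j \<noteq> 0" using cqq_ne1[OF q0 q1] by (intro qpoch_nonzero) auto
lemma qA_nz: "qpoch A q j \<noteq> 0" using Anz by (intro qpoch_nonzero) auto
lemma QQ_nz: "1 - Q * Q ^ j \<noteq> 0" using cqq_ne1[OF q0 q1, of j] by simp
lemma AQ_nz: "1 - A * Q ^ j \<noteq> 0" using Anz[of j] by simp

lemma phi_Suc: "phi (Suc j) = phi j * (1 - c1 * s * Q ^ j + c1 ^ 2 * Q ^ (2 * j))"
proof -
  have "(1 - c1 * e * Q ^ j) * (1 - c1 * e' * Q ^ j) = 1 - c1 * s * Q ^ j + c1 ^ 2 * (e * e') * Q ^ (2 * j)"
    unfolding s_def by (simp add: algebra_simps power2_eq_square power_mult mult_2)
  then show ?thesis unfolding phi_def qpoch_Suc using ee' by (simp add: mult_ac)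
qed

lemma s_phi: "s * phi j = (1 / (c1 * Q ^ j) + c1 * Q ^ j) * phi j - phi (Suc j) / (c1 * Q ^ j)"
proof -
  have "c1 * Q ^ j \<noteq> 0" using c1nz Qnz by simp
  then show ?thesis unfolding phi_Suc using q0 by (simp add: field_simps power2_eq_square power_mult mult_2 power_add)
qed

lemma QK_ne1: "K > 0 \<Longrightarrow> Q ^ K \<noteq> 1"
proof -
  assume "K > 0"
  then have "q ^ K < 1" using q0 q1 by (simp add: power_less_one_iff)
  then have "q ^ K \<noteq> 1" by simp
  then show ?thesis by (metis of_real_1 of_real_eq_iff of_real_power)
qed

lemma RI:
  assumes K: "K = Suc m"
  shows "(1 - A * Q ^ K) * Rk (Suc K) j
    = c1 * Rk K j * ((1 / (c1 * Q ^ j) + c1 * Q ^ j) - (c1 + c2) * Q ^ K)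
      - (if j = 0 then 0 else Rk K (j - 1) / Q ^ (j - 1))
      - c1 ^ 2 * (1 - Q ^ K) * Rk m j"
proof (cases j)
  case 0
  then show ?thesis using c1nz by (simp add: field_simps power2_eq_square)
next
  case (Suc i)
  define w where "w = inverse (Q ^ K)"
  define x where "x = Q ^ i"
  define y where "y = Q ^ K"
  define W where "W = qpoch w q i"
  define D0 where "D0 = qpoch Q q i * qpoch A q i"
  define M where "M = W * (Q * x) / (D0 * (1 - Q * x) * (1 - A * x))"
  have wy: "w * y = 1" unfolding w_def y_def using Qnz by simp
  have xnz: "x \<noteq> 0" unfolding x_def using Qnz by simp
  have "Q ^ K \<noteq> 1" using QK_ne1[of K] K by simp
  then have w1: "w \<noteq> 1" unfolding w_def by (metis inverse_1 inverse_inverse_eq)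
  have D0nz: "D0 \<noteq> 0" unfolding D0_def using qQ_nz qA_nz by simp
  have Qxnz: "1 - Q * x \<noteq> 0" unfolding x_def by (rule QQ_nz)
  have Axnz: "1 - A * x \<noteq> 0" unfolding x_def by (rule AQ_nz)
  have d1: "qpoch Q q (Suc i) * qpoch A q (Suc i) = D0 * (1 - Q * x) * (1 - A * x)"
    unfolding D0_def x_def by (simp add: qpoch_Suc mult_ac)
  have R1: "Rk (Suc K) j = M * (1 - w / Q)"
  proof -
    have "inverse (Q ^ Suc K) = w / Q" unfolding w_def by (simp add: field_simps)
    moreover have "w / Q * Q = w" using Qnz by simp
    ultimately have n1: "qpoch (inverse (Q ^ Suc K)) q (Suc i) = (1 - w / Q) * W"
      unfolding W_def by (simp only: qpoch_Suc_shift)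
    show ?thesis unfolding Rk_def Suc n1 d1 M_def
      by (simp add: x_def mult_ac)
  qed
  have R2: "Rk K j = M * (1 - w * x)"
  proof -
    have n2: "qpoch (inverse (Q ^ K)) q (Suc i) = W * (1 - w * x)"
      unfolding W_def w_def x_def by (simp only: qpoch_Suc)
    show ?thesis unfolding Rk_def Suc n2 d1 M_def
      by (simp add: x_def mult_ac)
  qed
  have R3: "Rk K (j - 1) / Q ^ (j - 1) = M * ((1 - Q * x) * (1 - A * x) / (Q * x))"
  proof -
    have "Rk K (j - 1) = W * x / D0"
      unfolding Rk_def Suc W_def w_def x_def D0_def by simp
    then have "Rk K (j - 1) / Q ^ (j - 1) = W / D0" using xnz unfolding Suc x_def by simp
    moreover have "\<And>a b c D W::complex. a \<noteq> 0 \<Longrightarrow> b \<noteq> 0 \<Longrightarrow> c \<noteq> 0 \<Longrightarrow> D \<noteq> 0 \<Longrightarrow>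
        W * a / (D * b * c) * (b * c / a) = W / D" by (simp add: field_simps)
    ultimately show ?thesis unfolding M_def using D0nz Qxnz Axnz xnz Qnz by simp
  qed
  have R4: "Rk m j = M * ((1 - w * x) * (1 - w * (Q * x)) / (1 - w))"
  proof -
    have iv: "inverse (Q ^ m) = w * Q" unfolding w_def K using Qnz by (simp add: field_simps)
    have "qpoch w q (Suc (Suc i)) = (1 - w) * qpoch (w * Q) q (Suc i)"
      by (rule qpoch_Suc_shift)
    then have "qpoch (w * Q) q (Suc i) = W * (1 - w * x) * (1 - w * (Q * x)) / (1 - w)"
      using w1 unfolding W_def x_def by (simp add: qpoch_Suc field_simps)
    then show ?thesis unfolding Rk_def Suc iv d1 M_def
      by (simp add: x_def mult_ac)
  qed
  have al: "(1 - A * y) * (1 - w / Q)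
    = c1 * (1 - w * x) * (1 / (c1 * (Q * x)) + c1 * (Q * x) - (c1 + c2) * y)
      - (1 - Q * x) * (1 - A * x) / (Q * x)
      - c1 ^ 2 * (1 - y) * ((1 - w * x) * (1 - w * (Q * x)) / (1 - w))"
    using alg_r[OF wy Qnz xnz c1nz w1] by simp
  have "(1 - A * Q ^ K) * Rk (Suc K) j = M * ((1 - A * y) * (1 - w / Q))"
    unfolding R1 y_def by (simp add: mult_ac)
  also have "\<dots> = M * (c1 * (1 - w * x) * (1 / (c1 * (Q * x)) + c1 * (Q * x) - (c1 + c2) * y))
      - M * ((1 - Q * x) * (1 - A * x) / (Q * x))
      - M * (c1 ^ 2 * (1 - y) * ((1 - w * x) * (1 - w * (Q * x)) / (1 - w)))"
    unfolding al by (simp add: right_diff_distrib)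
  also have "\<dots> = c1 * Rk K j * ((1 / (c1 * Q ^ j) + c1 * Q ^ j) - (c1 + c2) * Q ^ K)
      - (if j = 0 then 0 else Rk K (j - 1) / Q ^ (j - 1))
      - c1 ^ 2 * (1 - Q ^ K) * Rk m j"
    unfolding R2 R3 R4 using Suc by (simp add: x_def y_def mult_ac)
  finally show ?thesis .
qed

lemma gs_rec:
  "(1 - Q ^ Suc (Suc m)) * gs (Suc (Suc m))
     = (s - (c1 + c2) * Q ^ Suc m) * gs (Suc m) - (1 - A * Q ^ m) * gs m"
proof -
  define K where "K = Suc m"
  define N where "N = Suc (Suc K)"
  define T where "T j = Pk K * Rk K j" for j
  define d where "d j = 1 / (c1 * Q ^ j) + c1 * Q ^ j" for j
  define X where "X j = (if j = 0 then 0 else Pk K * Rk K (j - 1) / (c1 * Q ^ (j - 1)))" for j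
  have P1: "(1 - Q ^ Suc K) * Pk (Suc K) = Pk K * (1 - A * Q ^ K) / c1"
    unfolding Pk_def using qQ_nz[of K] QQ_nz[of K] c1nz
    by (simp add: qpoch_Suc field_simps)
  have P2: "(1 - A * Q ^ m) * Pk m = Pk K * c1 * (1 - Q ^ K)"
    unfolding Pk_def K_def using qQ_nz[of m] QQ_nz[of m] c1nz
    by (simp add: qpoch_Suc field_simps)
  have CI: "(1 - Q ^ Suc K) * (Pk (Suc K) * Rk (Suc K) j)
     = T j * (d j - (c1 + c2) * Q ^ K) - X j - (1 - A * Q ^ m) * (Pk m * Rk m j)" for j
  proof -
    have ri: "(1 - A * Q ^ K) * Rk (Suc K) j
      = c1 * Rk K j * (d j - (c1 + c2) * Q ^ K)
        - (if j = 0 then 0 else Rk K (j - 1) / Q ^ (j - 1))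
        - c1 ^ 2 * (1 - Q ^ K) * Rk m j"
      unfolding d_def by (rule RI[OF K_def])
    have x: "X j = Pk K / c1 * (if j = 0 then 0 else Rk K (j - 1) / Q ^ (j - 1))"
      unfolding X_def by simp
    have "(1 - Q ^ Suc K) * (Pk (Suc K) * Rk (Suc K) j) = Pk K / c1 * ((1 - A * Q ^ K) * Rk (Suc K) j)"
      unfolding mult.assoc[symmetric] P1 by simp
    also have "\<dots> = Pk K / c1 * (c1 * Rk K j * (d j - (c1 + c2) * Q ^ K))
        - Pk K / c1 * (if j = 0 then 0 else Rk K (j - 1) / Q ^ (j - 1))
        - Pk K / c1 * (c1 ^ 2 * (1 - Q ^ K) * Rk m j)"
      unfolding ri by (simp add: right_diff_distrib)
    also have "\<dots> = T j * (d j - (c1 + c2) * Q ^ K) - X j - (1 - A * Q ^ m) * (Pk m * Rk m j)"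
      unfolding x T_def using c1nz P2 by (simp add: power2_eq_square mult_ac)
    finally show ?thesis .
  qed
  have gK: "gs K = (\<Sum>j<N. T j * phi j)" unfolding T_def N_def by (rule gs_ext) simp
  have gm: "gs m = (\<Sum>j<N. Pk m * Rk m j * phi j)" unfolding N_def K_def by (rule gs_ext) simp
  have gSK: "gs (Suc K) = (\<Sum>j<N. Pk (Suc K) * Rk (Suc K) j * phi j)" unfolding N_def by (rule gs_ext) simp
  have "(1 - Q ^ Suc K) * gs (Suc K) = (\<Sum>j<N. (1 - Q ^ Suc K) * (Pk (Suc K) * Rk (Suc K) j) * phi j)"
    unfolding gSK by (simp add: sum_distrib_left mult_ac)
  also have "\<dots> = (\<Sum>j<N. T j * d j * phi j - (c1 + c2) * Q ^ K * (T j * phi j) - X j * phi j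
                     - (1 - A * Q ^ m) * (Pk m * Rk m j * phi j))"
    by (rule sum.cong[OF refl], unfold CI) (simp add: algebra_simps)
  also have "\<dots> = (\<Sum>j<N. T j * d j * phi j) - (c1 + c2) * Q ^ K * (\<Sum>j<N. T j * phi j)
      - (\<Sum>j<N. X j * phi j) - (1 - A * Q ^ m) * (\<Sum>j<N. Pk m * Rk m j * phi j)"
    by (simp add: sum_subtractf sum_distrib_left)
  finally have L: "(1 - Q ^ Suc K) * gs (Suc K) = (\<Sum>j<N. T j * d j * phi j) - (c1 + c2) * Q ^ K * gs K
      - (\<Sum>j<N. X j * phi j) - (1 - A * Q ^ m) * gs m" unfolding gK gm .
  have "s * gs K = (\<Sum>j<N. T j * (s * phi j))" unfolding gK by (simp add: sum_distrib_left mult_ac)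
  also have "\<dots> = (\<Sum>j<N. T j * d j * phi j - T j * (phi (Suc j) / (c1 * Q ^ j)))"
    by (rule sum.cong) (simp_all add: s_phi d_def algebra_simps)
  also have "\<dots> = (\<Sum>j<N. T j * d j * phi j) - (\<Sum>j<N. T j * (phi (Suc j) / (c1 * Q ^ j)))"
    by (simp add: sum_subtractf)
  finally have S: "s * gs K = (\<Sum>j<N. T j * d j * phi j) - (\<Sum>j<N. T j * (phi (Suc j) / (c1 * Q ^ j)))" .
  have "(\<Sum>j<N. X j * phi j) = X 0 * phi 0 + (\<Sum>j<Suc K. X (Suc j) * phi (Suc j))"
    unfolding N_def by (rule sum.lessThan_Suc_shift)
  also have "\<dots> = (\<Sum>j<Suc K. T j * (phi (Suc j) / (c1 * Q ^ j)))"
    unfolding X_def T_def by simp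
  also have "\<dots> = (\<Sum>j<N. T j * (phi (Suc j) / (c1 * Q ^ j)))"
    unfolding N_def using Rk_zero[of K "Suc K"] by (simp add: T_def)
  finally have XX: "(\<Sum>j<N. X j * phi j) = (\<Sum>j<N. T j * (phi (Suc j) / (c1 * Q ^ j)))" .
  have "(1 - Q ^ Suc K) * gs (Suc K) = s * gs K - (c1 + c2) * Q ^ K * gs K - (1 - A * Q ^ m) * gs m"
    unfolding L XX S by (simp add: algebra_simps)
  then show ?thesis unfolding K_def by (simp add: algebra_simps)
qed

end



no_notation vec_nth (infixl \<open>$\<close> 90)
notation fps_nth (infixl \<open>$\<close> 75)

definition Sq :: "real \<Rightarrow> complex fps \<Rightarrow> complex fps" where
  "Sq q F = Abs_fps (\<lambda>n. of_real q ^ n * F $ n)"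

lemma Sq_nth[simp]: "Sq q F $ n = of_real q ^ n * F $ n" by (simp add: Sq_def)

lemma Sq_mult: "Sq q (F * G) = Sq q F * Sq q G"
proof (rule fps_ext)
  fix n
  have "Sq q (F * G) $ n = (\<Sum>i=0..n. of_real q ^ n * (F $ i * G $ (n - i)))"
    by (simp add: fps_mult_nth sum_distrib_left)
  also have "\<dots> = (\<Sum>i=0..n. (of_real q ^ i * F $ i) * (of_real q ^ (n - i) * G $ (n - i)))"
  proof (rule sum.cong[OF refl])
    fix i assume "i \<in> {0..n}"
    then have "(of_real q :: complex) ^ n = of_real q ^ i * of_real q ^ (n - i)"
      by (simp add: power_add[symmetric])
    then show "of_real q ^ n * (F $ i * G $ (n - i)) = (of_real q ^ i * F $ i) * (of_real q ^ (n - i) * G $ (n - i))"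
      by (simp add: mult_ac)
  qed
  also have "\<dots> = (Sq q F * Sq q G) $ n" by (simp add: fps_mult_nth)
  finally show "Sq q (F * G) $ n = (Sq q F * Sq q G) $ n" .
qed

lemma fps_first_order:
  fixes f :: "nat \<Rightarrow> complex"
  assumes f0: "f 0 = 1" and rec: "\<And>m. (1 - of_real q ^ Suc m) * f (Suc m) = (e - c * of_real q ^ m) * f m"
  shows "(1 - fps_const e * fps_X) * Abs_fps f = (1 - fps_const c * fps_X) * Sq q (Abs_fps f)"
proof (rule fps_ext)
  fix n
  show "((1 - fps_const e * fps_X) * Abs_fps f) $ n = ((1 - fps_const c * fps_X) * Sq q (Abs_fps f)) $ n"
  proof (cases n)
    case 0
    then show ?thesis by (simp add: left_diff_distrib mult.assoc f0)
  next
    case (Suc m)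
    have "f (Suc m) - e * f m = of_real q ^ Suc m * f (Suc m) - c * (of_real q ^ m * f m)"
      using rec[of m] by (simp add: algebra_simps)
    then show ?thesis using Suc by (simp add: left_diff_distrib mult.assoc)
  qed
qed

context ascs
begin

definition "f1 m = qb (c1 * e') q m * e ^ m"
definition "f2 m = qb (c2 * e) q m * e' ^ m"
definition "hs k = (\<Sum>i\<le>k. f1 i * f2 (k - i))"

lemma e'e: "e' * e = 1" using ee' by (simp add: mult.commute)

lemma f1_rec: "(1 - Q ^ Suc m) * f1 (Suc m) = (e - c1 * Q ^ m) * f1 m"
proof -
  have "(1 - Q ^ Suc m) * f1 (Suc m) = (qb (c1 * e') q (Suc m) * (1 - Q ^ Suc m)) * (e * e ^ m)"
    unfolding f1_def by (simp only: mult_ac power_Suc)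
  also have "\<dots> = qb (c1 * e') q m * ((1 - c1 * e' * Q ^ m) * e) * e ^ m"
    unfolding qb_Suc[OF q0 q1, of "c1 * e'" m] by (simp only: mult_ac)
  also have "(1 - c1 * e' * Q ^ m) * e = e - c1 * Q ^ m"
    using e'e by (simp add: algebra_simps)
  finally show ?thesis unfolding f1_def by (simp add: mult_ac)
qed

lemma f2_rec: "(1 - Q ^ Suc m) * f2 (Suc m) = (e' - c2 * Q ^ m) * f2 m"
proof -
  have "(1 - Q ^ Suc m) * f2 (Suc m) = (qb (c2 * e) q (Suc m) * (1 - Q ^ Suc m)) * (e' * e' ^ m)"
    unfolding f2_def by (simp only: mult_ac power_Suc)
  also have "\<dots> = qb (c2 * e) q m * ((1 - c2 * e * Q ^ m) * e') * e' ^ m"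
    unfolding qb_Suc[OF q0 q1, of "c2 * e" m] by (simp only: mult_ac)
  also have "(1 - c2 * e * Q ^ m) * e' = e' - c2 * Q ^ m"
    using ee' by (simp add: algebra_simps)
  finally show ?thesis unfolding f2_def by (simp add: mult_ac)
qed

lemma H_eq:
  "(1 - fps_const s * fps_X + fps_X ^ 2) * (Abs_fps f1 * Abs_fps f2)
   = (1 - fps_const (c1 + c2) * fps_X + fps_const A * fps_X ^ 2) * Sq q (Abs_fps f1 * Abs_fps f2)"
proof -
  have E1: "(1 - fps_const e * fps_X) * Abs_fps f1 = (1 - fps_const c1 * fps_X) * Sq q (Abs_fps f1)"
    by (rule fps_first_order[OF _ f1_rec]) (simp add: f1_def qb_def)
  have E2: "(1 - fps_const e' * fps_X) * Abs_fps f2 = (1 - fps_const c2 * fps_X) * Sq q (Abs_fps f2)"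
    by (rule fps_first_order[OF _ f2_rec]) (simp add: f2_def qb_def)
  have p1: "(1 - fps_const e * fps_X) * (1 - fps_const e' * fps_X) = (1 - fps_const s * fps_X + fps_X ^ 2 :: complex fps)"
  proof -
    have "fps_const e * fps_const e' = (1 :: complex fps)" using ee' by (simp add: fps_const_mult)
    then show ?thesis unfolding s_def fps_const_add[symmetric]
      by (simp add: algebra_simps power2_eq_square)
  qed
  have p2: "(1 - fps_const c1 * fps_X) * (1 - fps_const c2 * fps_X) = (1 - fps_const (c1 + c2) * fps_X + fps_const A * fps_X ^ 2 :: complex fps)"
    unfolding fps_const_add[symmetric] fps_const_mult[symmetric]
    by (simp add: algebra_simps power2_eq_square)
  have "(1 - fps_const s * fps_X + fps_X ^ 2) * (Abs_fps f1 * Abs_fps f2)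
      = ((1 - fps_const e * fps_X) * Abs_fps f1) * ((1 - fps_const e' * fps_X) * Abs_fps f2)"
    unfolding p1[symmetric] by (simp add: mult_ac)
  also have "\<dots> = ((1 - fps_const c1 * fps_X) * (1 - fps_const c2 * fps_X)) * (Sq q (Abs_fps f1) * Sq q (Abs_fps f2))"
    unfolding E1 E2 by (simp add: mult_ac)
  finally show ?thesis unfolding p2 Sq_mult .
qed

lemma H_nth: "(Abs_fps f1 * Abs_fps f2) $ k = hs k"
  unfolding hs_def by (simp add: fps_mult_nth atLeast0AtMost)

lemma H_coeff:
  "hs n - s * (if n = 0 then 0 else hs (n - 1)) + (if n < 2 then 0 else hs (n - 2))
   = Q ^ n * hs n - (c1 + c2) * (if n = 0 then 0 else Q ^ (n - 1) * hs (n - 1))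
     + A * (if n < 2 then 0 else Q ^ (n - 2) * hs (n - 2))"
proof -
  define H where "H = Abs_fps f1 * Abs_fps f2"
  have Hn: "H $ k = hs k" for k unfolding H_def by (rule H_nth)
  have "((1 - fps_const s * fps_X + fps_X ^ 2) * H) $ n
      = ((1 - fps_const (c1 + c2) * fps_X + fps_const A * fps_X ^ 2) * Sq q H) $ n"
    using H_eq unfolding H_def by simp
  moreover have "((1 - fps_const s * fps_X + fps_X ^ 2) * H) $ n
      = H $ n - s * (if n = 0 then 0 else H $ (n - 1)) + (if n < 2 then 0 else H $ (n - 2))"
    by (simp add: ring_distribs mult.assoc fps_X_power_mult_nth del: power_Suc)
  moreover have "((1 - fps_const (c1 + c2) * fps_X + fps_const A * fps_X ^ 2) * Sq q H) $ n
      = Sq q H $ n - (c1 + c2) * (if n = 0 then 0 else Sq q H $ (n - 1)) + A * (if n < 2 then 0 else Sq q H $ (n - 2))"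
    by (simp only: ring_distribs mult.assoc fps_X_power_mult_nth fps_add_nth fps_sub_nth
        fps_mult_left_const_nth fps_X_mult_nth mult_1 fps_one_nth)
  ultimately show ?thesis unfolding Hn Sq_nth by (simp split: if_splits)
qed

lemma hs_0: "hs 0 = 1" unfolding hs_def f1_def f2_def qb_def by simp

lemma hs_rec:
  "(1 - Q ^ Suc (Suc m)) * hs (Suc (Suc m))
     = (s - (c1 + c2) * Q ^ Suc m) * hs (Suc m) - (1 - A * Q ^ m) * hs m"
  using H_coeff[of "Suc (Suc m)"] by (simp add: algebra_simps)

lemma hs_1: "(1 - Q) * hs 1 = s - c1 - c2"
  using H_coeff[of 1] hs_0 by (simp add: algebra_simps)

lemma gs_0: "gs 0 = 1" unfolding gs_def Pk_def phi_def by simp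

lemma gs_1: "(1 - Q) * gs 1 = s - c1 - c2"
proof -
  have a: "1 - A \<noteq> 0" using Anz[of 0] by simp
  have b: "1 - Q \<noteq> 0" using QQ_nz[of 0] by simp
  have p1: "phi 1 = 1 - c1 * s + c1 ^ 2"
    using phi_Suc[of 0] by (simp add: phi_def)
  have "gs 1 = Pk 1 * (1 + Rk 1 1 * phi 1)" unfolding gs_def by (simp add: algebra_simps phi_def)
  moreover have "Rk 1 1 = - 1 / (1 - A)"
  proof -
    have "Rk 1 1 = (1 - inverse Q) * Q / ((1 - Q) * (1 - A))" unfolding Rk_def by (simp add: qpoch_def)
    also have "(1 - inverse Q) * Q = - (1 - Q)" using Qnz by (simp add: field_simps)
    finally have "Rk 1 1 = - (1 - Q) / ((1 - Q) * (1 - A))" by simp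
    moreover have "\<And>u v :: complex. u \<noteq> 0 \<Longrightarrow> v \<noteq> 0 \<Longrightarrow> - u / (u * v) = - 1 / v"
      by (simp add: field_simps)
    ultimately show ?thesis using a b by metis
  qed
  moreover have "Pk 1 = (1 - A) / ((1 - Q) * c1)" unfolding Pk_def by (simp add: qpoch_def)
  ultimately have g1: "gs 1 = (1 - A) / ((1 - Q) * c1) * (1 + (- 1 / (1 - A)) * phi 1)" by simp
  have gen: "\<And>u v c P :: complex. u \<noteq> 0 \<Longrightarrow> v \<noteq> 0 \<Longrightarrow> c \<noteq> 0 \<Longrightarrow>
     u * (v / (u * c) * (1 + (- 1 / v) * P)) = (v - P) / c" by (simp add: field_simps)
  have "(1 - Q) * gs 1 = ((1 - A) - phi 1) / c1" unfolding g1 by (rule gen[OF b a c1nz])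
  also have "\<dots> = s - c1 - c2" unfolding p1 using c1nz by (simp add: field_simps power2_eq_square)
  finally show ?thesis .
qed

lemma gs_hs: "gs k = hs k"
proof -
  have "gs k = hs k \<and> gs (Suc k) = hs (Suc k)"
  proof (induction k)
    case 0
    have "1 - Q \<noteq> 0" using QQ_nz[of 0] by simp
    then show ?case using gs_0 hs_0 gs_1 hs_1 by (metis One_nat_def mult_left_cancel)
  next
    case (Suc k)
    have nz: "1 - Q ^ Suc (Suc k) \<noteq> 0" using QQ_nz[of "Suc k"] by simp
    have "(1 - Q ^ Suc (Suc k)) * gs (Suc (Suc k)) = (1 - Q ^ Suc (Suc k)) * hs (Suc (Suc k))"
      unfolding gs_rec hs_rec using Suc by simp
    then show ?case using Suc nz by simp
  qed
  then show ?thesis by simp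
qed

end



context ascs
begin

lemma norm_e[simp]: "norm e = 1" "norm e' = 1" unfolding e_def e'_def by simp_all

lemma gen_fun:
  assumes t: "norm t < 1"
  shows "(\<lambda>k. gs k * t ^ k) sums
    (qpoch_inf (c1 * t) q * qpoch_inf (c2 * t) q / (qpoch_inf (t * e) q * qpoch_inf (t * e') q))"
proof -
  define a where "a i = qb (c1 * e') q i * (t * e) ^ i" for i
  define b where "b i = qb (c2 * e) q i * (t * e') ^ i" for i
  have n1: "norm (t * e) < 1" "norm (t * e') < 1" using t by (simp_all add: norm_mult)
  have sa: "summable (\<lambda>k. norm (a k))" unfolding a_def by (rule qb_summable[OF q0 q1 n1(1)])
  have sb: "summable (\<lambda>k. norm (b k))" unfolding b_def by (rule qb_summable[OF q0 q1 n1(2)])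
  have A1: "suminf a = qpoch_inf (c1 * t) q / qpoch_inf (t * e) q"
  proof -
    have "a sums (qpoch_inf (c1 * e' * (t * e)) q / qpoch_inf (t * e) q)"
      unfolding a_def by (rule q_binomial[OF q0 q1 n1(1)])
    moreover have "c1 * e' * (t * e) = c1 * t" using e'e by (simp add: mult_ac)
    ultimately show ?thesis using sums_unique by (metis)
  qed
  have B1: "suminf b = qpoch_inf (c2 * t) q / qpoch_inf (t * e') q"
  proof -
    have "b sums (qpoch_inf (c2 * e * (t * e')) q / qpoch_inf (t * e') q)"
      unfolding b_def by (rule q_binomial[OF q0 q1 n1(2)])
    moreover have "c2 * e * (t * e') = c2 * t" using ee' by (simp add: mult_ac)
    ultimately show ?thesis using sums_unique by (metis)
  qed
  have "(\<lambda>k. \<Sum>i\<le>k. a i * b (k - i)) sums (suminf a * suminf b)"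
    by (rule Cauchy_product_sums[OF sa sb])
  moreover have "(\<Sum>i\<le>k. a i * b (k - i)) = gs k * t ^ k" for k
  proof -
    have "(\<Sum>i\<le>k. a i * b (k - i)) = (\<Sum>i\<le>k. f1 i * f2 (k - i) * t ^ k)"
    proof (rule sum.cong[OF refl])
      fix i assume "i \<in> {..k}"
      then have "t ^ k = t ^ i * t ^ (k - i)" by (simp add: power_add[symmetric])
      then show "a i * b (k - i) = f1 i * f2 (k - i) * t ^ k"
        unfolding a_def b_def f1_def f2_def by (simp add: power_mult_distrib mult_ac)
    qed
    also have "\<dots> = hs k * t ^ k" unfolding hs_def by (simp add: sum_distrib_right)
    finally show ?thesis by (simp add: gs_hs)
  qed
  ultimately show ?thesis unfolding A1 B1 by (simp add: field_simps)
qed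

end



lemma qphi_fin:
  assumes "q \<noteq> 0"
  shows "qphi (inverse (of_real q ^ n) # as) bs q z =
    (\<Sum>j<Suc n. qpoch (inverse (of_real q ^ n)) q j * (\<Prod>a\<leftarrow>as. qpoch a q j)
        / (qpoch (of_real q) q j * (\<Prod>b\<leftarrow>bs. qpoch b q j))
        * (((-1) ^ j * of_real q ^ (j * (j - 1) div 2)) powi (1 + int (length bs) - int (length (inverse (of_real q ^ n) # as))))
        * z ^ j)"
  unfolding qphi_def list.map prod_list.Cons
  by (rule suminf_finite) (use assms qpoch_inv_zero in auto)

lemma (in ascs) asc_eq:
  assumes "0 \<le> \<theta>" "\<theta> \<le> pi"
  shows "al_salam_chihara k (cos \<theta>) c1 c2 q / qpoch Q q k = gs k"
proof -
  have th: "arccos (cos \<theta>) = \<theta>" using assms by (rule arccos_cos)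
  have "al_salam_chihara k (cos \<theta>) c1 c2 q
     = qpoch A q k / c1 ^ k * (\<Sum>j<Suc k. qpoch (inverse (Q ^ k)) q j * Q ^ j / (qpoch Q q j * qpoch A q j) * phi j)"
    unfolding al_salam_chihara_def Let_def th qphi_fin[OF q0[THEN less_imp_neq, symmetric]]
    by (simp add: phi_def e_def e'_def mult_ac)
  moreover have "gs k = Pk k * (\<Sum>j<Suc k. qpoch (inverse (Q ^ k)) q j * Q ^ j / (qpoch Q q j * qpoch A q j) * phi j)"
    unfolding gs_def Rk_def sum_distrib_left by (rule sum.cong[OF refl]) (simp add: mult_ac)
  ultimately show ?thesis unfolding Pk_def by (simp add: mult_ac)
qed



lemma lqj_fin:
  assumes "q \<noteq> 0"
  shows "little_q_jacobi n x a b q = (\<Sum>j<Suc n. qpoch (inverse (of_real q ^ n)) q j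
     * qpoch (a * b * of_real q ^ (n + 1)) q j / (qpoch (of_real q) q j * qpoch (a * of_real q) q j)
     * (of_real q * x) ^ j)"
  unfolding little_q_jacobi_def qphi_fin[OF assms] by simp

lemma aw_fin:
  assumes "q \<noteq> 0" "0 \<le> \<theta>" "\<theta> \<le> pi"
  shows "askey_wilson n (cos \<theta>) a1 a2 a3 a4 q =
    qpoch (a1 * a2) q n * qpoch (a1 * a3) q n * qpoch (a1 * a4) q n / a1 ^ n *
    (\<Sum>j<Suc n. qpoch (inverse (of_real q ^ n)) q j * qpoch (a1 * a2 * a3 * a4 * of_real q ^ n / of_real q) q j
      * qpoch (a1 * cis \<theta>) q j * qpoch (a1 * cis (- \<theta>)) q j
      / (qpoch (of_real q) q j * qpoch (a1 * a2) q j * qpoch (a1 * a3) q j * qpoch (a1 * a4) q j)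
      * of_real q ^ j)"
proof -
  have th: "arccos (cos \<theta>) = \<theta>" using assms(2,3) by (rule arccos_cos)
  show ?thesis unfolding askey_wilson_def Let_def th qphi_fin[OF assms(1)]
    by (simp add: mult_ac)
qed

lemma key_alg:
  fixes tn I1 I2 Pa F1 F2 E1 E2 X1j X2j P1 P2 iq ab Qj aQj Qp :: complex
  assumes "tn \<noteq> 0" "Pa \<noteq> 0" "F1 \<noteq> 0" "F2 \<noteq> 0" "E1 \<noteq> 0" "E2 \<noteq> 0" "X1j \<noteq> 0" "X2j \<noteq> 0"
    "Qj \<noteq> 0" "aQj \<noteq> 0"
  shows "tn * I1 * I2 / (Pa * (F1 * E1) * (F2 * E2)) * ((X1j * P1) * (X2j * P2) * Pa / tn)
     * (iq * ab * F1 * F2 / (Qj * X1j * X2j * aQj) * Qp)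
   = iq * ab / (Qj * aQj) * Qp * ((P1 * I1) * (P2 * I2) / (E1 * E2))"
  using assms by (simp add: field_simps)

lemma key_alg2:
  fixes tn I1 I2 Pa F1 F2 E1 E2 X1j X2j P1 P2 iq ab Qj aQj Qp :: complex
  assumes "tn \<noteq> 0" "Pa \<noteq> 0" "F1 \<noteq> 0" "F2 \<noteq> 0" "E1 \<noteq> 0" "E2 \<noteq> 0" "X1j \<noteq> 0" "X2j \<noteq> 0"
    "Qj \<noteq> 0" "aQj \<noteq> 0"
  shows "tn * I1 * I2 / (Pa * (F1 * E1) * (F2 * E2)) *
     (X1j * P1 * (X2j * P2) * Pa / tn * (iq * ab * F1 * F2 / (Qj * X1j * X2j * aQj) * Qp))
   = iq * ab / (Qj * aQj) * Qp * (P1 * I1 * (P2 * I2) / (E1 * E2))"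
  using assms by (simp add: field_simps)



theorem mainTheorem7:
  fixes q a b \<alpha> \<theta> :: real and c :: complex and n :: nat
  assumes "0 < q" "q < 1"
    and "0 < a" "a < 1 / q"
    and "b < 1 / q"
    and "c \<noteq> 0"
    and "\<And>m::nat. m \<ge> 1 \<Longrightarrow> of_real (\<alpha> * a * q ^ m) * c \<noteq> 1"
    and "\<And>m::nat. m \<ge> 1 \<Longrightarrow> of_real (\<alpha> * b * q ^ m) / c \<noteq> 1"
    and "sqrt (a * q) < \<alpha>" "\<alpha> < 1 / sqrt (a * q)"
    and "0 \<le> \<theta>" "\<theta> \<le> pi"
  shows "(\<lambda>k. of_real (\<alpha> ^ k) * little_q_jacobi n (of_real (q ^ k)) (of_real a) (of_real b) q
            * of_real (sqrt (a * q) ^ k) / qpoch (of_real q) q k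
            * al_salam_chihara k (cos \<theta>) (c * of_real (sqrt (a * q)))
                (of_real b / c * of_real (sqrt (q / a))) q)
         sums
         (of_real (\<alpha> ^ n * sqrt (a * q) ^ n)
            * qpoch_inf (of_real (\<alpha> * a * q ^ (n + 1)) * c) q
            * qpoch_inf (of_real (\<alpha> * b * q ^ (n + 1)) / c) q
          / (qpoch (of_real (a * q)) q n
             * qpoch_inf (of_real (\<alpha> * sqrt (a * q)) * cis \<theta>) q
             * qpoch_inf (of_real (\<alpha> * sqrt (a * q)) * cis (- \<theta>)) q)
          * askey_wilson n (cos \<theta>) (of_real (\<alpha> * sqrt (a * q))) (c * of_real (sqrt (a * q)))
              (of_real b / c * of_real (sqrt (q / a))) (of_real (sqrt (a * q) / \<alpha>)) q)"

proof -
  have q0: "0 < q" and q1: "q < 1" and a0: "0 < a" and a1: "a < 1 / q" and b1: "b < 1 / q"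
    and cnz: "c \<noteq> 0" and al1: "sqrt (a * q) < \<alpha>" and al2: "\<alpha> < 1 / sqrt (a * q)"
    and th0: "0 \<le> \<theta>" and th1: "\<theta> \<le> pi" using assms by auto
  have hA: "\<And>m::nat. m \<ge> 1 \<Longrightarrow> of_real (\<alpha> * a * q ^ m) * c \<noteq> 1" using assms(7) by blast
  have hB: "\<And>m::nat. m \<ge> 1 \<Longrightarrow> of_real (\<alpha> * b * q ^ m) / c \<noteq> 1" using assms(8) by blast
  define sa where "sa = sqrt (a * q)"
  have sa0: "0 < sa" unfolding sa_def using a0 q0 by simp
  have sa2: "sa * sa = a * q" unfolding sa_def using a0 q0 by simp
  have sqa: "sqrt (q / a) * sa = q"
  proof -
    have "sqrt (q / a) * sa = sqrt (q / a * (a * q))" unfolding sa_def by (rule real_sqrt_mult[symmetric])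
    also have "q / a * (a * q) = q ^ 2" using a0 by (simp add: field_simps power2_eq_square)
    finally show ?thesis using q0 by simp
  qed
  have al0: "0 < \<alpha>" using al1 sa0 unfolding sa_def by linarith
  define T where "T = \<alpha> * sa"
  have T0: "0 < T" unfolding T_def using al0 sa0 by simp
  have T1: "T < 1" unfolding T_def using al2 sa0 unfolding sa_def[symmetric] by (simp add: pos_less_divide_eq)
  define c1 where "c1 = c * of_real sa"
  define c2 where "c2 = of_real b / c * of_real (sqrt (q / a))"
  have c1nz: "c1 \<noteq> 0" unfolding c1_def using cnz sa0 by simp
  have A_eq: "c1 * c2 = of_real (b * q)"
  proof -
    have "c1 * c2 = of_real b * of_real (sqrt (q / a) * sa)"
      unfolding c1_def c2_def using cnz by (simp add: field_simps)
    then show ?thesis unfolding sqa by simp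
  qed
  have bq: "b * q * q ^ i < 1" for i
  proof -
    have bq1: "b * q < 1" using b1 q0 by (simp add: pos_less_divide_eq)
    have qi: "q ^ i \<le> 1" "0 \<le> q ^ i" using q0 q1 by (simp_all add: power_le_one)
    show ?thesis
    proof (cases "b * q \<le> 0")
      case True
      then have "b * q * q ^ i \<le> 0" using qi by (simp add: mult_nonpos_nonneg)
      then show ?thesis by simp
    next
      case False
      then have "b * q * q ^ i \<le> b * q" using qi by (simp add: mult_right_le_one_le)
      then show ?thesis using bq1 by simp
    qed
  qed
  have Anz: "c1 * c2 * of_real q ^ i \<noteq> 1" for i
  proof -
    have "c1 * c2 * of_real q ^ i = of_real (b * q * q ^ i)" unfolding A_eq by simp
    moreover have "b * q * q ^ i \<noteq> 1" using bq[of i] by simp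
    ultimately show ?thesis by (metis of_real_1 of_real_eq_iff)
  qed
  interpret ascs q c1 c2 \<theta> using q0 q1 c1nz Anz by unfold_locales auto
  define tT where "tT = complex_of_real T"
  define X1 where "X1 = c1 * tT"
  define X2 where "X2 = c2 * tT"
  have X1Q: "X1 * Q ^ i = of_real (\<alpha> * a * q ^ Suc i) * c" for i
  proof -
    have "X1 = c * of_real (\<alpha> * (sa * sa))" unfolding X1_def c1_def tT_def T_def by (simp add: mult_ac)
    then show ?thesis unfolding sa2 by (simp add: mult_ac)
  qed
  have X2Q: "X2 * Q ^ i = of_real (\<alpha> * b * q ^ Suc i) / c" for i
  proof -
    have "X2 = of_real b / c * of_real (\<alpha> * (sqrt (q / a) * sa))"
      unfolding X2_def c2_def tT_def T_def by (simp add: mult_ac)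
    then show ?thesis unfolding sqa by (simp add: mult_ac)
  qed
  have X1nz: "qpoch X1 q j \<noteq> 0" for j
  proof (rule qpoch_nonzero)
    fix i show "X1 * Q ^ i \<noteq> 1" unfolding X1Q using hA[of "Suc i"] by simp
  qed
  have X2nz: "qpoch X2 q j \<noteq> 0" for j
  proof (rule qpoch_nonzero)
    fix i show "X2 * Q ^ i \<noteq> 1" unfolding X2Q using hB[of "Suc i"] by simp
  qed
  have ntT: "norm tT = T" unfolding tT_def using T0 by simp
  have tTx: "tT * x * Q ^ i \<noteq> 1" if "norm x = 1" for x i
  proof -
    have "norm (tT * x * Q ^ i) = T * q ^ i" using that ntT q0 by (simp add: norm_mult norm_power)
    also have "\<dots> \<le> T" using q0 q1 T0 by (simp add: mult_right_le_one_le power_le_one)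
    finally show ?thesis using T1 by auto
  qed
  have aQ_nz: "qpoch (of_real a * Q) q j \<noteq> 0" for j
  proof (rule qpoch_nonzero)
    fix i
    have "a * q * q ^ i < 1"
    proof -
      have "a * q < 1" using a1 q0 by (simp add: pos_less_divide_eq)
      moreover have "a * q * q ^ i \<le> a * q" using a0 q0 q1 by (simp add: mult_right_le_one_le power_le_one)
      ultimately show ?thesis by simp
    qed
    then have "a * q * q ^ i \<noteq> 1" by simp
    then show "of_real a * Q * Q ^ i \<noteq> 1" by (metis of_real_1 of_real_eq_iff of_real_mult of_real_power)
  qed
  define w where "w j = qpoch (inverse (Q ^ n)) q j * qpoch (of_real a * of_real b * Q ^ (n + 1)) q j
      / (qpoch Q q j * qpoch (of_real a * Q) q j) * Q ^ j" for j
  define Gen where "Gen t = qpoch_inf (c1 * t) q * qpoch_inf (c2 * t) q / (qpoch_inf (t * e) q * qpoch_inf (t * e') q)" for t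
  have pw: "(Q * Q ^ k) ^ j = Q ^ j * (Q ^ j) ^ k" for j k
    by (simp add: power_mult_distrib) (metis power_mult mult.commute)
  have lqj: "little_q_jacobi n (of_real (q ^ k)) (of_real a) (of_real b) q = (\<Sum>j<Suc n. w j * (Q ^ j) ^ k)" for k
    unfolding lqj_fin[OF q0[THEN less_imp_neq, symmetric]] w_def of_real_power pw by (simp add: mult_ac)
  have asc: "al_salam_chihara k (cos \<theta>) c1 c2 q = gs k * qpoch Q q k" for k
    using asc_eq[OF th0 th1, of k] qQ_nz[of k] by (simp add: field_simps)
  have trm: "of_real (\<alpha> ^ k) * little_q_jacobi n (of_real (q ^ k)) (of_real a) (of_real b) q
            * of_real (sa ^ k) / qpoch (of_real q) q k
            * al_salam_chihara k (cos \<theta>) c1 c2 q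
      = (\<Sum>j<Suc n. w j * (gs k * (tT * Q ^ j) ^ k))" for k
  proof -
    have "of_real (\<alpha> ^ k) * of_real (sa ^ k) = tT ^ k" unfolding tT_def T_def by (simp add: power_mult_distrib)
    note tk = this
    have gen: "\<And>x y L G P::complex. P \<noteq> 0 \<Longrightarrow> x * L * y / P * (G * P) = (x * y) * (G * L)"
      by (simp add: field_simps)
    have "of_real (\<alpha> ^ k) * little_q_jacobi n (of_real (q ^ k)) (of_real a) (of_real b) q
            * of_real (sa ^ k) / qpoch (of_real q) q k * al_salam_chihara k (cos \<theta>) c1 c2 q
        = tT ^ k * (gs k * (\<Sum>j<Suc n. w j * (Q ^ j) ^ k))"
      unfolding asc tk[symmetric] lqj[symmetric] by (rule gen[OF qQ_nz])
    also have "\<dots> = (\<Sum>j<Suc n. w j * (gs k * (tT * Q ^ j) ^ k))"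
      unfolding sum_distrib_left by (rule sum.cong[OF refl]) (simp add: power_mult_distrib mult_ac)
    finally show ?thesis .
  qed
  have sums1: "(\<lambda>k. \<Sum>j<Suc n. w j * (gs k * (tT * Q ^ j) ^ k)) sums (\<Sum>j<Suc n. w j * Gen (tT * Q ^ j))"
  proof (intro sums_sum sums_mult)
    fix j
    have "norm (tT * Q ^ j) < 1"
    proof -
      have "norm (tT * Q ^ j) = T * q ^ j" using ntT q0 by (simp add: norm_mult norm_power)
      also have "\<dots> \<le> T" using q0 q1 T0 by (simp add: mult_right_le_one_le power_le_one)
      finally show ?thesis using T1 by auto
    qed
    then show "(\<lambda>k. gs k * (tT * Q ^ j) ^ k) sums Gen (tT * Q ^ j)" unfolding Gen_def by (rule gen_fun)
  qed
  define v where "v j = qpoch (inverse (Q ^ n)) q j * qpoch (of_real a * of_real b * Q ^ (n + 1)) q j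
      * qpoch (tT * e) q j * qpoch (tT * e') q j
      / (qpoch Q q j * qpoch X1 q j * qpoch X2 q j * qpoch (of_real a * Q) q j) * Q ^ j" for j
  have tsa: "tT * complex_of_real (sa / \<alpha>) = of_real a * Q"
    unfolding tT_def T_def using al0 sa2 by (simp add: field_simps flip: of_real_mult)
  have AW: "askey_wilson n (cos \<theta>) tT c1 c2 (of_real (sa / \<alpha>)) q
      = qpoch X1 q n * qpoch X2 q n * qpoch (of_real a * Q) q n / tT ^ n * (\<Sum>j<Suc n. v j)"
  proof -
    have p1: "tT * c1 = X1" "tT * c2 = X2" unfolding X1_def X2_def by (simp_all add: mult.commute)
    have p4: "X1 * c2 * complex_of_real (sa / \<alpha>) * Q ^ n / Q = of_real a * of_real b * Q ^ (n + 1)"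
    proof -
      have "X1 * c2 * complex_of_real (sa / \<alpha>) * Q ^ n / Q = (c1 * c2) * (tT * complex_of_real (sa / \<alpha>)) * Q ^ n / Q"
        unfolding X1_def by (simp add: mult_ac)
      also have "\<dots> = of_real a * of_real b * Q ^ (n + 1)" unfolding A_eq tsa using Qnz by (simp add: field_simps)
      finally show ?thesis .
    qed
    show ?thesis unfolding aw_fin[OF q0[THEN less_imp_neq, symmetric] th0 th1] p4 p1 tsa v_def
      e_def[symmetric] e'_def[symmetric] by (simp add: mult_ac)
  qed
  have r1: "complex_of_real (\<alpha> * sa) = tT" unfolding tT_def T_def ..
  have r2: "complex_of_real (\<alpha> * a * q ^ (n + 1)) * c = X1 * Q ^ n" unfolding X1Q by simp
  have r3: "complex_of_real (\<alpha> * b * q ^ (n + 1)) / c = X2 * Q ^ n" unfolding X2Q by simp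
  have r4: "complex_of_real (a * q) = of_real a * Q" by simp
  have r5: "complex_of_real (\<alpha> ^ n * sa ^ n) = tT ^ n" unfolding tT_def T_def by (simp add: power_mult_distrib)
  have tTnz: "tT \<noteq> 0" unfolding tT_def using T0 by simp
  have Fnz: "qpoch (tT * x) q j \<noteq> 0" if "norm x = 1" for x j
    by (rule qpoch_nonzero) (use tTx[OF that] in auto)
  have Enz: "qpoch_inf (tT * x * Q ^ j) q \<noteq> 0" if "norm x = 1" for x j
  proof (rule qpoch_inf_nonzero)
    fix i show "tT * x * Q ^ j * Q ^ i \<noteq> 1" using tTx[OF that, of "j + i"] by (simp add: power_add mult_ac)
  qed (use q0 q1 in auto)
  have termwise: "tT ^ n * qpoch_inf (X1 * Q ^ n) q * qpoch_inf (X2 * Q ^ n) q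
        / (qpoch (of_real a * Q) q n * qpoch_inf (tT * e) q * qpoch_inf (tT * e') q)
        * (qpoch X1 q n * qpoch X2 q n * qpoch (of_real a * Q) q n / tT ^ n * v j)
      = w j * Gen (tT * Q ^ j)" if "j < Suc n" for j
  proof -
    have jn: "n = j + (n - j)" using that by simp
    have s1: "qpoch_inf (tT * e) q = qpoch (tT * e) q j * qpoch_inf (tT * e * Q ^ j) q"
      by (rule qpoch_inf_split) (use q0 q1 in auto)
    have s2: "qpoch_inf (tT * e') q = qpoch (tT * e') q j * qpoch_inf (tT * e' * Q ^ j) q"
      by (rule qpoch_inf_split) (use q0 q1 in auto)
    have s3: "qpoch X1 q n = qpoch X1 q j * qpoch (X1 * Q ^ j) q (n - j)"
      by (subst jn, subst qpoch_add) simp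
    have s4: "qpoch X2 q n = qpoch X2 q j * qpoch (X2 * Q ^ j) q (n - j)"
      by (subst jn, subst qpoch_add) simp
    have qq: "X * Q ^ j * Q ^ (n - j) = X * Q ^ n" for X
      using jn by (metis mult.assoc power_add)
    have s5: "qpoch_inf (X1 * Q ^ j) q = qpoch (X1 * Q ^ j) q (n - j) * qpoch_inf (X1 * Q ^ n) q"
      using qpoch_inf_split[OF _ q1, of "X1 * Q ^ j" "n - j"] q0 unfolding qq by simp
    have s6: "qpoch_inf (X2 * Q ^ j) q = qpoch (X2 * Q ^ j) q (n - j) * qpoch_inf (X2 * Q ^ n) q"
      using qpoch_inf_split[OF _ q1, of "X2 * Q ^ j" "n - j"] q0 unfolding qq by simp
    have g: "Gen (tT * Q ^ j) = qpoch_inf (X1 * Q ^ j) q * qpoch_inf (X2 * Q ^ j) q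
        / (qpoch_inf (tT * e * Q ^ j) q * qpoch_inf (tT * e' * Q ^ j) q)"
      unfolding Gen_def X1_def X2_def by (simp add: mult_ac)
    have nzs: "tT ^ n \<noteq> 0" "qpoch (of_real a * Q) q n \<noteq> 0" "qpoch (tT * e) q j \<noteq> 0" "qpoch (tT * e') q j \<noteq> 0"
      "qpoch_inf (tT * e * Q ^ j) q \<noteq> 0" "qpoch_inf (tT * e' * Q ^ j) q \<noteq> 0"
      "qpoch X1 q j \<noteq> 0" "qpoch X2 q j \<noteq> 0" "qpoch Q q j \<noteq> 0" "qpoch (of_real a * Q) q j \<noteq> 0"
      using tTnz aQ_nz Fnz Enz X1nz X2nz qQ_nz by auto
    show ?thesis unfolding g s1 s2 s3 s4 s5 s6 v_def w_def
      by (rule key_alg2[OF nzs])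
  qed
  have RHS: "of_real (\<alpha> ^ n * sa ^ n)
            * qpoch_inf (of_real (\<alpha> * a * q ^ (n + 1)) * c) q
            * qpoch_inf (of_real (\<alpha> * b * q ^ (n + 1)) / c) q
          / (qpoch (of_real (a * q)) q n
             * qpoch_inf (of_real (\<alpha> * sa) * cis \<theta>) q
             * qpoch_inf (of_real (\<alpha> * sa) * cis (- \<theta>)) q)
          * askey_wilson n (cos \<theta>) (of_real (\<alpha> * sa)) c1 c2 (of_real (sa / \<alpha>)) q
      = (\<Sum>j<Suc n. w j * Gen (tT * Q ^ j))"
    unfolding r1 r2 r3 r4 r5 e_def[symmetric] e'_def[symmetric] AW
    unfolding sum_distrib_left by (rule sum.cong[OF refl]) (use termwise in auto)
  have LHS: "(\<lambda>k. of_real (\<alpha> ^ k) * little_q_jacobi n (of_real (q ^ k)) (of_real a) (of_real b) q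
            * of_real (sa ^ k) / qpoch (of_real q) q k
            * al_salam_chihara k (cos \<theta>) c1 c2 q) = (\<lambda>k. \<Sum>j<Suc n. w j * (gs k * (tT * Q ^ j) ^ k))"
    by (rule ext) (rule trm)
  show ?thesis unfolding sa_def[symmetric] c1_def[symmetric] c2_def[symmetric] LHS RHS
    by (rule sums1)
qed


end
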